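(* Let $\chi$ and $\zeta$ be two splitting maps on $\mathcal H$ with $\zeta\sqsubseteq\chi$. Then (1) $\mathrm{loc}(\zeta)\subseteq\mathrm{loc}(\chi)$ and (2) $\mathrm{stloc}(\zeta)\subseteq\mathrm{stloc}(\chi)$.
   Context: All Hilbert spaces are finite-dimensional and complex. A splitting map on $\mathcal H$ is an isometry $\chi:\mathcal H\to\mathcal H_L^\chi\otimes\mathcal H_R^\chi$. $A\in\mathcal L(\mathcal H)$ is $\chi$-local if $A=\chi^\dagger(\tilde A\otimes\mathbb 1)\chi$ for some $\tilde A\in\mathcal L(\mathcal H_L^\chi)$; $\mathrm{loc}(\chi)$ is the set of these. $A$ is strictly $\chi$-local if there exists $\tilde A\in\mathcal L(\mathcal H_L^\chi)$ with $A\chi^\dagger=\chi^\dagger(\tilde A\otimes\mathbb 1)$ and $\chi A=(\tilde A\otimes\mathbb 1)\chi$; $\mathrm{stloc}(\chi)$ is the set of these. Comprehension: $\zeta\sqsubseteq\chi$ if there exist a Hilbert space $\mathcal H_M$ and isometries $\bullet:\mathcal H_R^\zeta\to\mathcal H_M\otimes\mathcal H_R^\chi$ and $\circ:\mathcal H_L^\chi\to\mathcal H_L^\zeta\otimes\mathcal H_M$ with $(\mathbb 1_{\mathcal H_L^\zeta}\otimes\bullet)\zeta=(\circ\otimes\mathbb 1_{\mathcal H_R^\chi})\chi$. *)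

theory Defs
  imports "Jordan_Normal_Form.Matrix"
begin

(* Finite-dimensional complex Hilbert spaces are modelled as C^d (given by their
   dimension d), linear maps as complex matrices, tensor products as Kronecker
   products (row-major convention, which is associative on indices). *)

definition adj :: "complex mat \<Rightarrow> complex mat" where
  "adj A = mat (dim_col A) (dim_row A) (\<lambda>(i,j). cnj (A $$ (j,i)))"

definition kron :: "complex mat \<Rightarrow> complex mat \<Rightarrow> complex mat" where
  "kron A B = mat (dim_row A * dim_row B) (dim_col A * dim_col B)
     (\<lambda>(i,j). A $$ (i div dim_row B, j div dim_col B) * B $$ (i mod dim_row B, j mod dim_col B))"

definition isometry :: "complex mat \<Rightarrow> nat \<Rightarrow> nat \<Rightarrow> bool" where
  "isometry V m n \<longleftrightarrow> V \<in> carrier_mat m n \<and> adj V * V = 1\<^sub>m n"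

definition splitting_map :: "nat \<Rightarrow> nat \<Rightarrow> nat \<Rightarrow> complex mat \<Rightarrow> bool" where
  "splitting_map n dL dR \<chi> \<longleftrightarrow> isometry \<chi> (dL * dR) n"

definition loc :: "nat \<Rightarrow> nat \<Rightarrow> nat \<Rightarrow> complex mat \<Rightarrow> complex mat set" where
  "loc n dL dR \<chi> = {A \<in> carrier_mat n n. \<exists>At \<in> carrier_mat dL dL.
      A = adj \<chi> * kron At (1\<^sub>m dR) * \<chi>}"

definition stloc :: "nat \<Rightarrow> nat \<Rightarrow> nat \<Rightarrow> complex mat \<Rightarrow> complex mat set" where
  "stloc n dL dR \<chi> = {A \<in> carrier_mat n n. \<exists>At \<in> carrier_mat dL dL.
      A * adj \<chi> = adj \<chi> * kron At (1\<^sub>m dR) \<and> \<chi> * A = kron At (1\<^sub>m dR) * \<chi>}"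

(* comprehension  zeta \<sqsubseteq> chi ;  zeta : H \<rightarrow> C^dLz \<otimes> C^dRz,  chi : H \<rightarrow> C^dLc \<otimes> C^dRc *)
definition comprehends :: "nat \<Rightarrow> nat \<Rightarrow> complex mat \<Rightarrow> nat \<Rightarrow> nat \<Rightarrow> complex mat \<Rightarrow> bool" where
  "comprehends dLz dRz \<zeta> dLc dRc \<chi> \<longleftrightarrow>
     (\<exists>dM bul cir. isometry bul (dM * dRc) dRz \<and> isometry cir (dLz * dM) dLc \<and>
        kron (1\<^sub>m dLz) bul * \<zeta> = kron cir (1\<^sub>m dRc) * \<chi>)"

end

theory Submission
  imports Defs
begin

lemma sum_divmod:
  fixes f :: "nat \<Rightarrow> nat \<Rightarrow> 'a::comm_monoid_add"
  shows "(\<Sum>k<m*n. f (k div n) (k mod n)) = (\<Sum>a<m. \<Sum>b<n. f a b)"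
proof (induction m)
  case 0 then show ?case by simp
next
  case (Suc m)
  have "{..<Suc m * n} = {..<m*n} \<union> {m*n..<m*n+n}" by auto
  then have "(\<Sum>k<Suc m*n. f (k div n) (k mod n)) = (\<Sum>k<m*n. f (k div n) (k mod n)) + (\<Sum>k\<in>{m*n..<m*n+n}. f (k div n) (k mod n))"
    by (simp add: sum.union_disjoint ivl_disj_int)
  also have "(\<Sum>k\<in>{m*n..<m*n+n}. f (k div n) (k mod n)) = (\<Sum>b<n. f m b)"
  proof -
    have "(\<Sum>k\<in>{m*n..<m*n+n}. f (k div n) (k mod n)) = (\<Sum>b\<in>{0..<n}. f ((b + m*n) div n) ((b+m*n) mod n))"
      by (subst sum.shift_bounds_nat_ivl[symmetric]) (simp add: add.commute)
    also have "\<dots> = (\<Sum>b<n. f m b)"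
      by (rule sum.cong) auto
    finally show ?thesis .
  qed
  finally show ?case using Suc by simp
qed

lemma adj_carrier[simp]: "A \<in> carrier_mat m n \<Longrightarrow> adj A \<in> carrier_mat n m"
  by (auto simp: adj_def)
lemma adj_dims[simp]: "dim_row (adj A) = dim_col A" "dim_col (adj A) = dim_row A"
  by (auto simp: adj_def)
lemma adj_index[simp]: "i < dim_col A \<Longrightarrow> j < dim_row A \<Longrightarrow> adj A $$ (i,j) = cnj (A $$ (j,i))"
  by (auto simp: adj_def)
lemma adj_adj[simp]: "adj (adj A) = A"
  by (rule eq_matI) auto
lemma adj_mult: "A \<in> carrier_mat m k \<Longrightarrow> B \<in> carrier_mat k n \<Longrightarrow> adj (A * B) = adj B * adj A"
  by (rule eq_matI) (auto simp: scalar_prod_def mult.commute intro!: sum.cong)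
lemma adj_one[simp]: "adj (1\<^sub>m n) = 1\<^sub>m n"
  by (rule eq_matI) auto

lemma kron_carrier[simp]: "kron A B \<in> carrier_mat (dim_row A * dim_row B) (dim_col A * dim_col B)"
  by (auto simp: kron_def)
lemma kron_dims[simp]: "dim_row (kron A B) = dim_row A * dim_row B" "dim_col (kron A B) = dim_col A * dim_col B"
  by (auto simp: kron_def)
lemma kron_index[simp]: "i < dim_row A * dim_row B \<Longrightarrow> j < dim_col A * dim_col B \<Longrightarrow>
  kron A B $$ (i,j) = A $$ (i div dim_row B, j div dim_col B) * B $$ (i mod dim_row B, j mod dim_col B)"
  by (auto simp: kron_def)

lemma idx_lt1: "i < a * b \<Longrightarrow> i div b < (a::nat)"
  by (simp add: less_mult_imp_div_less)
lemma idx_lt2: "i < a * b \<Longrightarrow> i mod b < (b::nat)"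
  by (metis mod_less_divisor mult_0_right neq0_conv not_less0)
lemmas idx_lt = idx_lt1 idx_lt2
lemma dm1: "(i::nat) div (b*c) = i div c div b" by (metis div_mult2_eq mult.commute)
lemma dm2: "((i::nat) mod (b*c)) div c = i div c mod b"
proof (cases "c = 0")
  case False
  have "i mod (b*c) = c * (i div c mod b) + i mod c" by (metis mod_mult2_eq mult.commute)
  then show ?thesis using False by simp
qed simp
lemma dm3: "((i::nat) mod (b*c)) mod c = i mod c"
  by (metis mod_mod_cancel dvd_triv_right)

lemma adj_kron: "adj (kron A B) = kron (adj A) (adj B)"
  by (rule eq_matI) (auto simp: idx_lt)

lemma kron_mult:
  assumes "A \<in> carrier_mat ra ca" "B \<in> carrier_mat rb cb" "C \<in> carrier_mat ca cc" "D \<in> carrier_mat cb cd"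
  shows "kron A B * kron C D = kron (A * C) (B * D)"
proof (rule eq_matI)
  fix i j assume ij: "i < dim_row (kron (A * C) (B * D))" "j < dim_col (kron (A * C) (B * D))"
  then have i: "i < ra * rb" and j: "j < cc * cd" using assms by auto
  have "(kron A B * kron C D) $$ (i,j) = (\<Sum>k<ca*cb. kron A B $$ (i,k) * kron C D $$ (k,j))"
    using assms i j by (auto simp: scalar_prod_def intro!: sum.cong)
  also have "\<dots> = (\<Sum>k<ca*cb. (\<lambda>a b. A $$ (i div rb, a) * B $$ (i mod rb, b) * (C $$ (a, j div cd) * D $$ (b, j mod cd))) (k div cb) (k mod cb))"
    using assms i j by (intro sum.cong) (auto simp: idx_lt)
  also have "\<dots> = (\<Sum>a<ca. \<Sum>b<cb. A $$ (i div rb, a) * B $$ (i mod rb, b) * (C $$ (a, j div cd) * D $$ (b, j mod cd)))"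
    by (rule sum_divmod)
  also have "\<dots> = (\<Sum>a<ca. A $$ (i div rb, a) * C $$ (a, j div cd)) * (\<Sum>b<cb. B $$ (i mod rb, b) * D $$ (b, j mod cd))"
    by (simp add: sum_product mult_ac)
  also have "\<dots> = kron (A * C) (B * D) $$ (i,j)"
    using assms i j by (simp add: scalar_prod_def atLeast0LessThan idx_lt)
  finally show "(kron A B * kron C D) $$ (i,j) = kron (A * C) (B * D) $$ (i,j)" .
qed (use assms in auto)

lemma kron_assoc: "kron (kron A B) C = kron A (kron B C)"
  by (rule eq_matI) (auto simp: idx_lt dm1 dm2 dm3 mult_ac)

lemma kron_one: "kron (1\<^sub>m a) (1\<^sub>m b) = 1\<^sub>m (a * b)"
proof (rule eq_matI)
  fix i j assume "i < dim_row (1\<^sub>m (a * b))" "j < dim_col (1\<^sub>m (a * b))"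
  then have ij: "i < a*b" "j < a*b" by auto
  have "(i div b = j div b \<and> i mod b = j mod b) = (i = j)"
    by (metis div_mult_mod_eq)
  then show "kron (1\<^sub>m a) (1\<^sub>m b) $$ (i, j) = 1\<^sub>m (a * b) $$ (i, j)"
    using ij by (auto simp: idx_lt)
qed auto

lemma massoc: "dim_col A = dim_row B \<Longrightarrow> dim_col B = dim_row C \<Longrightarrow> A * B * C = A * (B * (C :: 'a::semiring_0 mat))"
  by (rule assoc_mult_mat[of A _ "dim_col A" _ "dim_col B" _ "dim_col C"]) auto

theorem mainTheorem9:
  fixes n dLz dRz dLc dRc :: nat and \<zeta> \<chi> :: "complex mat"
  assumes "splitting_map n dLz dRz \<zeta>"
    and "splitting_map n dLc dRc \<chi>"
    and "comprehends dLz dRz \<zeta> dLc dRc \<chi>"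
  shows "loc n dLz dRz \<zeta> \<subseteq> loc n dLc dRc \<chi> \<and> stloc n dLz dRz \<zeta> \<subseteq> stloc n dLc dRc \<chi>"
proof -
  from assms(3) obtain dM bul cir where
    ib: "isometry bul (dM * dRc) dRz" and ic: "isometry cir (dLz * dM) dLc"
    and eq0: "kron (1\<^sub>m dLz) bul * \<zeta> = kron cir (1\<^sub>m dRc) * \<chi>"
    unfolding comprehends_def by blast
  have cz: "\<zeta> \<in> carrier_mat (dLz*dRz) n" and zz: "adj \<zeta> * \<zeta> = 1\<^sub>m n"
    using assms(1) by (auto simp: splitting_map_def isometry_def)
  have cx: "\<chi> \<in> carrier_mat (dLc*dRc) n" and xx: "adj \<chi> * \<chi> = 1\<^sub>m n"
    using assms(2) by (auto simp: splitting_map_def isometry_def)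
  have cb: "bul \<in> carrier_mat (dM * dRc) dRz" and bb: "adj bul * bul = 1\<^sub>m dRz"
    using ib by (auto simp: isometry_def)
  have cc: "cir \<in> carrier_mat (dLz * dM) dLc" and ccc: "adj cir * cir = 1\<^sub>m dLc"
    using ic by (auto simp: isometry_def)
  define N where "N = dLz * dM * dRc"
  define B where "B = kron (1\<^sub>m dLz) bul"
  define C where "C = kron cir (1\<^sub>m dRc)"
  have cB: "B \<in> carrier_mat N (dLz*dRz)" using cb unfolding B_def N_def by (auto simp: mult_ac)
  have cC: "C \<in> carrier_mat N (dLc*dRc)" using cc unfolding C_def N_def by (auto simp: mult_ac)
  note dims0 = carrier_matD[OF cz] carrier_matD[OF cx] carrier_matD[OF cB] carrier_matD[OF cC]
  have eq: "B * \<zeta> = C * \<chi>" using eq0 unfolding B_def C_def .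
  have BB: "adj B * B = 1\<^sub>m (dLz*dRz)"
    unfolding B_def adj_kron using cb bb
    by (simp add: kron_mult[of _ dLz dLz _ dRz "dM*dRc" _ dLz _ dRz] kron_one)
  have CC: "adj C * C = 1\<^sub>m (dLc*dRc)"
    unfolding C_def adj_kron using cc ccc
    by (simp add: kron_mult[of _ dLc "dLz*dM" _ dRc dRc _ dLc _ dRc] kron_one)
  have xeq: "\<chi> = adj C * B * \<zeta>"
  proof -
    note dims = dims0
    have "\<chi> = adj C * C * \<chi>" using CC cx by simp
    also have "\<dots> = adj C * (C * \<chi>)" using cC cx by (simp add: massoc dims)
    also have "\<dots> = adj C * B * \<zeta>" using cB cC cz by (simp add: massoc eq dims)
    finally show ?thesis .
  qed
  have K: "kron At (1\<^sub>m (dM*dRc)) * B = B * kron At (1\<^sub>m dRz)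
     \<and> adj B * kron At (1\<^sub>m (dM*dRc)) = kron At (1\<^sub>m dRz) * adj B
     \<and> adj C * kron At (1\<^sub>m (dM*dRc)) * C = kron (adj cir * kron At (1\<^sub>m dM) * cir) (1\<^sub>m dRc)"
    if cA: "At \<in> carrier_mat dLz dLz" for At
  proof (intro conjI)
    show "kron At (1\<^sub>m (dM*dRc)) * B = B * kron At (1\<^sub>m dRz)"
      unfolding B_def using cA cb
      by (simp add: kron_mult[of _ dLz dLz _ "dM*dRc" "dM*dRc" _ dLz _ dRz]
                    kron_mult[of _ dLz dLz _ "dM*dRc" dRz _ dLz _ dRz])
    show "adj B * kron At (1\<^sub>m (dM*dRc)) = kron At (1\<^sub>m dRz) * adj B"
      unfolding B_def adj_kron using cA cb
      by (simp add: kron_mult[of _ dLz dLz _ dRz "dM*dRc" _ dLz _ "dM*dRc"]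
                    kron_mult[of _ dLz dLz _ dRz "dRz" _ dLz _ "dM*dRc"])
    have "kron At (1\<^sub>m (dM*dRc)) = kron (kron At (1\<^sub>m dM)) (1\<^sub>m dRc)"
      by (simp add: kron_assoc kron_one)
    then show "adj C * kron At (1\<^sub>m (dM*dRc)) * C = kron (adj cir * kron At (1\<^sub>m dM) * cir) (1\<^sub>m dRc)"
    proof -
      have "kron (adj cir) (1\<^sub>m dRc) * kron (kron At (1\<^sub>m dM)) (1\<^sub>m dRc) = kron (adj cir * kron At (1\<^sub>m dM)) (1\<^sub>m dRc)"
        using cA cc by (subst kron_mult[of _ dLc "dLz*dM" _ dRc dRc _ "dLz*dM" _ dRc]) auto
      moreover have "kron (adj cir * kron At (1\<^sub>m dM)) (1\<^sub>m dRc) * kron cir (1\<^sub>m dRc) = kron (adj cir * kron At (1\<^sub>m dM) * cir) (1\<^sub>m dRc)"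
        using cA cc by (subst kron_mult[of _ dLc "dLz*dM" _ dRc dRc _ "dLc" _ dRc]) auto
      ultimately show ?thesis unfolding C_def adj_kron \<open>kron At (1\<^sub>m (dM*dRc)) = _\<close> by simp
    qed
  qed
  show ?thesis
  proof (intro conjI subsetI)
    fix A assume "A \<in> loc n dLz dRz \<zeta>"
    then obtain At where cAn: "A \<in> carrier_mat n n" and cA: "At \<in> carrier_mat dLz dLz"
      and Aeq: "A = adj \<zeta> * kron At (1\<^sub>m dRz) * \<zeta>" unfolding loc_def by blast
    define K where "K = kron At (1\<^sub>m (dM*dRc))"
    have cK: "K \<in> carrier_mat N N" unfolding K_def N_def using cA by (auto simp: mult_ac)
    have T: "kron At (1\<^sub>m dRz) = adj B * K * B"
    proof -
      note dims = dims0 carrier_matD[OF cA]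
      have "adj B * K * B = kron At (1\<^sub>m dRz) * adj B * B" using K[OF cA] unfolding K_def by simp
      also have "\<dots> = kron At (1\<^sub>m dRz) * (adj B * B)" using cA cB by (simp add: massoc dims)
      finally show ?thesis using BB cA by simp
    qed
    note dims = dims0 carrier_matD[OF cK]
    have "A = adj \<zeta> * (adj B * K * B) * \<zeta>" using Aeq T by simp
    also have "\<dots> = adj (B * \<zeta>) * K * (B * \<zeta>)"
      using cz cB cK by (simp add: adj_mult[OF cB cz] massoc dims)
    also have "\<dots> = adj \<chi> * (adj C * K * C) * \<chi>"
      unfolding eq using cx cC cK by (simp add: adj_mult[OF cC cx] massoc dims)
    finally have "A = adj \<chi> * kron (adj cir * kron At (1\<^sub>m dM) * cir) (1\<^sub>m dRc) * \<chi>"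
      using K[OF cA] unfolding K_def by simp
    moreover have "adj cir * kron At (1\<^sub>m dM) * cir \<in> carrier_mat dLc dLc" using cc cA by auto
    ultimately show "A \<in> loc n dLc dRc \<chi>" unfolding loc_def using cAn by blast
  next
    fix A assume "A \<in> stloc n dLz dRz \<zeta>"
    then obtain At where cAn: "A \<in> carrier_mat n n" and cA: "At \<in> carrier_mat dLz dLz"
      and A1: "A * adj \<zeta> = adj \<zeta> * kron At (1\<^sub>m dRz)" and A2: "\<zeta> * A = kron At (1\<^sub>m dRz) * \<zeta>"
      unfolding stloc_def by blast
    define K where "K = kron At (1\<^sub>m (dM*dRc))"
    have cK: "K \<in> carrier_mat N N" unfolding K_def N_def using cA by (auto simp: mult_ac)
    have cT: "kron At (1\<^sub>m dRz) \<in> carrier_mat (dLz*dRz) (dLz*dRz)" using cA by auto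
    define At' where "At' = adj cir * kron At (1\<^sub>m dM) * cir"
    have cA': "At' \<in> carrier_mat dLc dLc" using cc cA unfolding At'_def by auto
    have KB: "K * B = B * kron At (1\<^sub>m dRz)" and BK: "adj B * K = kron At (1\<^sub>m dRz) * adj B"
      and CKC: "adj C * K * C = kron At' (1\<^sub>m dRc)"
      using K[OF cA] unfolding K_def At'_def by auto
    note dims = dims0 carrier_matD[OF cK] carrier_matD[OF cAn] carrier_matD[OF cT] carrier_matD[OF cA]
    have "\<chi> * A = adj C * B * \<zeta> * A" using xeq by simp
    also have "\<dots> = adj C * B * (\<zeta> * A)" using cC cB cz cAn by (simp add: massoc dims)
    also have "\<dots> = adj C * (B * kron At (1\<^sub>m dRz)) * \<zeta>" unfolding A2
      by (subst assoc_mult_mat[OF adj_carrier[OF cC] cB cT, symmetric])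
         (rule assoc_mult_mat[OF mult_carrier_mat[OF adj_carrier[OF cC] cB] cT cz, symmetric])
    also have "\<dots> = adj C * K * (B * \<zeta>)" unfolding KB[symmetric] using cC cB cz cK by (simp add: massoc dims)
    also have "\<dots> = adj C * K * C * \<chi>" unfolding eq using cC cx cK by (simp add: massoc dims)
    finally have X1: "\<chi> * A = kron At' (1\<^sub>m dRc) * \<chi>" unfolding CKC .
    have ax: "adj \<chi> = adj \<zeta> * (adj B * C)"
      by (subst xeq) (simp add: adj_mult[OF mult_carrier_mat[OF adj_carrier[OF cC] cB] cz] adj_mult[OF adj_carrier[OF cC] cB])
    have "A * adj \<chi> = A * (adj \<zeta> * (adj B * C))" by (simp add: ax)
    also have "\<dots> = A * adj \<zeta> * adj B * C" using cAn cz cB cC by (simp add: massoc dims)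
    also have "\<dots> = adj \<zeta> * (kron At (1\<^sub>m dRz) * adj B) * C" unfolding A1 using cz cT cB by (simp add: massoc dims)
    also have "\<dots> = adj \<zeta> * adj B * K * C" unfolding BK[symmetric] using cz cB cK by (simp add: massoc dims)
    also have "\<dots> = adj (B * \<zeta>) * K * C" by (simp add: adj_mult[OF cB cz])
    also have "\<dots> = adj \<chi> * (adj C * K * C)" unfolding eq adj_mult[OF cC cx] using cx cC cK by (simp add: massoc dims)
    finally have X2: "A * adj \<chi> = adj \<chi> * kron At' (1\<^sub>m dRc)" unfolding CKC .
    show "A \<in> stloc n dLc dRc \<chi>" unfolding stloc_def using cAn cA' X1 X2 by blast
  qed
qed

end
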